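(* Let $\mathcal{A}$ be an association scheme with splitting field $L$ and Krein field $K$, and let $\sigma\in\mathrm{Gal}(L/\mathbb{Q})$. Then the map $\hat\sigma$ on $L[\mathcal{A}]$, defined by $M^{\hat\sigma}=\sum_ja_jE_j^\sigma$ for $M=\sum_ja_jE_j$, is a Bose–Mesner algebra automorphism of $L[\mathcal{A}]$ if and only if $\sigma$ fixes every element of $K$, i.e. $\sigma\in\mathrm{Gal}(L/K)$.
   Context: An association scheme on $v$ vertices is a set $\mathcal{A}=\{A_0,\ldots,A_d\}$ of $v\times v$ $(0,1)$-matrices with $A_0=I$, $\sum_iA_i=J$, closed under transpose, pairwise commuting, and with all products $A_iA_j$ in the span of $\mathcal{A}$. Its principal idempotents are the pairwise orthogonal Hermitian idempotents $E_0,\ldots,E_d$ summing to $I$ that form a basis of the span, with $A_iE_j=p_i(j)E_j$; the splitting field is $L=\mathbb{Q}(p_i(j):i,j)$ and $L[\mathcal{A}]$ is the $L$-span of $\mathcal{A}$. The Krein parameters $q_{ij}(k)$ are defined by $E_i\circ E_j=\frac1v\sum_kq_{ij}(k)E_k$ ($\circ$ the Schur product), and the Krein field $K$ is $\mathbb{Q}$ adjoined all Krein parameters (it is a subfield of $L$). For $\sigma\in\mathrm{Gal}(L/\mathbb{Q})$, $M^\sigma$ denotes entrywise application of $\sigma$; it permutes $\{E_0,\ldots,E_d\}$. A Bose–Mesner algebra automorphism of $L[\mathcal{A}]$ is an invertible $L$-linear map $\psi$ with $(MN)^\psi=M^\psi N^\psi$, $(M\circ N)^\psi=M^\psi\circ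 N^\psi$ and $(M^* )^\psi=(M^\psi)^*$. *)

theory Defs
  imports "HOL-Analysis.Analysis"
begin

type_synonym 'v cmat = "complex^'v^'v"

definition smat :: "complex \<Rightarrow> 'v::finite cmat \<Rightarrow> 'v::finite cmat" where
  "smat c M = (\<chi> i j. c * M $ i $ j)"

definition schur :: "'v::finite cmat \<Rightarrow> 'v::finite cmat \<Rightarrow> 'v::finite cmat" where
  "schur M N = (\<chi> i j. M $ i $ j * N $ i $ j)"

definition ctrans :: "'v::finite cmat \<Rightarrow> 'v::finite cmat" where
  "ctrans M = (\<chi> i j. cnj (M $ j $ i))"

definition Jmat :: "'v::finite cmat" where
  "Jmat = (\<chi> i j. 1)"

definition entrywise :: "(complex \<Rightarrow> complex) \<Rightarrow> 'v::finite cmat \<Rightarrow> 'v::finite cmat" where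
  "entrywise f M = (\<chi> i j. f (M $ i $ j))"

definition lincomb :: "nat \<Rightarrow> (nat \<Rightarrow> complex) \<Rightarrow> (nat \<Rightarrow> 'v::finite cmat) \<Rightarrow> 'v::finite cmat" where
  "lincomb d c M = (\<Sum>i\<le>d. smat (c i) (M i))"

definition assoc_scheme :: "nat \<Rightarrow> (nat \<Rightarrow> 'v::finite cmat) \<Rightarrow> bool" where
  "assoc_scheme d A \<longleftrightarrow>
     (\<forall>i\<le>d. \<forall>x y. A i $ x $ y \<in> {0, 1}) \<and>
     (\<forall>i\<le>d. A i \<noteq> 0) \<and>
     A 0 = mat 1 \<and>
     (\<Sum>i\<le>d. A i) = Jmat \<and>
     (\<forall>i\<le>d. \<exists>j\<le>d. transpose (A i) = A j) \<and>
     (\<forall>i\<le>d. \<forall>j\<le>d. A i ** A j = A j ** A i) \<and>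
     (\<forall>i\<le>d. \<forall>j\<le>d. \<exists>c. A i ** A j = lincomb d c A)"

definition principal_idempotents :: "nat \<Rightarrow> (nat \<Rightarrow> 'v::finite cmat) \<Rightarrow> (nat \<Rightarrow> 'v::finite cmat) \<Rightarrow> bool" where
  "principal_idempotents d A E \<longleftrightarrow>
     (\<forall>j\<le>d. E j ** E j = E j) \<and>
     (\<forall>i\<le>d. \<forall>j\<le>d. i \<noteq> j \<longrightarrow> E i ** E j = 0) \<and>
     (\<forall>j\<le>d. ctrans (E j) = E j) \<and>
     (\<Sum>j\<le>d. E j) = mat 1 \<and>
     (\<forall>j\<le>d. \<exists>c. E j = lincomb d c A) \<and>
     (\<forall>i\<le>d. \<exists>c. A i = lincomb d c E) \<and>
     (\<forall>c. lincomb d c E = 0 \<longrightarrow> (\<forall>j\<le>d. c j = 0))"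

definition subfield :: "complex set \<Rightarrow> bool" where
  "subfield F \<longleftrightarrow> 0 \<in> F \<and> 1 \<in> F \<and>
     (\<forall>x\<in>F. \<forall>y\<in>F. x + y \<in> F \<and> x * y \<in> F) \<and>
     (\<forall>x\<in>F. - x \<in> F \<and> inverse x \<in> F)"

definition gen_field :: "complex set \<Rightarrow> complex set" where
  "gen_field S = \<Inter>{F. subfield F \<and> S \<subseteq> F}"

definition field_aut :: "complex set \<Rightarrow> (complex \<Rightarrow> complex) \<Rightarrow> bool" where
  "field_aut L \<sigma> \<longleftrightarrow> bij_betw \<sigma> L L \<and> \<sigma> 1 = 1 \<and>
     (\<forall>x\<in>L. \<forall>y\<in>L. \<sigma> (x + y) = \<sigma> x + \<sigma> y \<and> \<sigma> (x * y) = \<sigma> x * \<sigma> y)"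

definition Lspan :: "complex set \<Rightarrow> nat \<Rightarrow> (nat \<Rightarrow> 'v::finite cmat) \<Rightarrow> 'v::finite cmat set" where
  "Lspan L d A = {M. \<exists>c. (\<forall>i\<le>d. c i \<in> L) \<and> M = lincomb d c A}"

definition coeffs :: "nat \<Rightarrow> (nat \<Rightarrow> 'v::finite cmat) \<Rightarrow> 'v::finite cmat \<Rightarrow> nat \<Rightarrow> complex" where
  "coeffs d E M = (THE a. (\<forall>j>d. a j = 0) \<and> M = lincomb d a E)"

definition hat :: "(complex \<Rightarrow> complex) \<Rightarrow> nat \<Rightarrow> (nat \<Rightarrow> 'v::finite cmat) \<Rightarrow> 'v::finite cmat \<Rightarrow> 'v::finite cmat" where
  "hat \<sigma> d E M = (\<Sum>j\<le>d. smat (coeffs d E M j) (entrywise \<sigma> (E j)))"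

definition BM_aut :: "complex set \<Rightarrow> 'v::finite cmat set \<Rightarrow> ('v::finite cmat \<Rightarrow> 'v::finite cmat) \<Rightarrow> bool" where
  "BM_aut L S \<psi> \<longleftrightarrow>
     bij_betw \<psi> S S \<and>
     (\<forall>M\<in>S. \<forall>N\<in>S. \<psi> (M + N) = \<psi> M + \<psi> N) \<and>
     (\<forall>c\<in>L. \<forall>M\<in>S. \<psi> (smat c M) = smat c (\<psi> M)) \<and>
     (\<forall>M\<in>S. \<forall>N\<in>S. \<psi> (M ** N) = \<psi> M ** \<psi> N) \<and>
     (\<forall>M\<in>S. \<forall>N\<in>S. \<psi> (schur M N) = schur (\<psi> M) (\<psi> N)) \<and>
     (\<forall>M\<in>S. \<psi> (ctrans M) = ctrans (\<psi> M))"

end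

theory Submission
  imports Defs
begin


lemma matmul_entry: "(X ** Y) $ x $ y = (\<Sum>k\<in>UNIV. X $ x $ k * Y $ k $ y)"
  by (simp add: matrix_matrix_mult_def)

lemma lincomb_entry: "lincomb d c M $ x $ y = (\<Sum>i\<le>d. c i * M i $ x $ y)"
  unfolding lincomb_def smat_def by simp

lemma smat_entry: "smat c M $ x $ y = c * M $ x $ y"
  unfolding smat_def by simp

lemma schur_entry: "schur M N $ x $ y = M $ x $ y * N $ x $ y"
  unfolding schur_def by simp

lemma ctrans_entry: "ctrans M $ x $ y = cnj (M $ y $ x)"
  unfolding ctrans_def by simp

lemma ent_entry: "entrywise f M $ x $ y = f (M $ x $ y)"
  unfolding entrywise_def by simp

lemma mat_eqI: "(\<And>x y. (M::'v::finite cmat) $ x $ y = N $ x $ y) \<Longrightarrow> M = N"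
  by (simp add: vec_eq_iff)

lemma lincomb_cong: "(\<And>i. i \<le> d \<Longrightarrow> a i = b i) \<Longrightarrow> (\<And>i. i \<le> d \<Longrightarrow> X i = Y i)
   \<Longrightarrow> lincomb d a X = lincomb d b Y"
  unfolding lincomb_def by (rule sum.cong) auto

lemma lincomb_add: "lincomb d a X + lincomb d b X = lincomb d (\<lambda>i. a i + b i) X"
  by (rule mat_eqI) (simp add: lincomb_entry sum.distrib[symmetric] distrib_right)

lemma smat_lincomb: "smat c (lincomb d a X) = lincomb d (\<lambda>i. c * a i) X"
  by (rule mat_eqI) (simp add: lincomb_entry smat_entry sum_distrib_left mult.assoc)

lemma lincomb_smat: "lincomb d b (\<lambda>j. smat (a j) (X j)) = lincomb d (\<lambda>j. b j * a j) X"
  by (rule mat_eqI) (simp add: lincomb_entry smat_entry mult.assoc)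

lemma lincomb_mult_right: "lincomb d a X ** Y = lincomb d a (\<lambda>i. X i ** Y)"
  apply (rule mat_eqI)
  apply (simp add: lincomb_entry matmul_entry sum_distrib_right sum_distrib_left mult.assoc)
  by (rule sum.swap)

lemma lincomb_mult_left: "Y ** lincomb d a X = lincomb d a (\<lambda>i. Y ** X i)"
  apply (rule mat_eqI)
  apply (simp add: lincomb_entry matmul_entry sum_distrib_right sum_distrib_left mult.assoc mult.left_commute)
  by (rule sum.swap)

lemma lincomb_delta: "j \<le> d \<Longrightarrow> lincomb d (\<lambda>i. if i = j then 1 else 0) X = X j"
  apply (rule mat_eqI)
  apply (simp add: lincomb_entry)
  apply (subst sum.cong[OF refl, where h = "\<lambda>i. if i = j then X j $ x $ y else 0"])
  by auto

lemma lincomb_lincomb: "lincomb d c (\<lambda>i. lincomb d (r i) X) = lincomb d (\<lambda>k. \<Sum>i\<le>d. c i * r i k) X"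
  apply (rule mat_eqI)
  apply (simp add: lincomb_entry sum_distrib_left sum_distrib_right mult.assoc)
  by (rule sum.swap)

lemma lincomb_zero: "lincomb d (\<lambda>i. 0) X = 0"
  by (rule mat_eqI) (simp add: lincomb_entry)

lemma sum_as_lincomb: "(\<Sum>j\<le>d. X j) = lincomb d (\<lambda>_. 1) X"
  by (rule mat_eqI) (simp add: lincomb_entry)

lemma smat_cancel: "smat a M = smat b M \<Longrightarrow> M \<noteq> 0 \<Longrightarrow> a = b"
proof -
  assume h: "smat a M = smat b M" "M \<noteq> 0"
  then obtain x y where "M $ x $ y \<noteq> 0" by (auto simp: vec_eq_iff)
  moreover have "a * M $ x $ y = b * M $ x $ y" using h(1) by (metis smat_entry)
  ultimately show "a = b" by simp
qed

definition orth :: "nat \<Rightarrow> (nat \<Rightarrow> 'v::finite cmat) \<Rightarrow> bool" where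
  "orth d X \<longleftrightarrow> (\<forall>i\<le>d. \<forall>j\<le>d. X i ** X j = (if i = j then X i else 0))"

lemma orth_proj: "orth d X \<Longrightarrow> k \<le> d \<Longrightarrow> lincomb d a X ** X k = smat (a k) (X k)"
  unfolding orth_def lincomb_mult_right
  apply (rule mat_eqI)
  apply (simp add: lincomb_entry smat_entry)
  apply (subst sum.cong[OF refl, where h = "\<lambda>i. if i = k then a k * X k $ x $ y else 0"])
  by auto

lemma orth_mult: "orth d X \<Longrightarrow> lincomb d a X ** lincomb d b X = lincomb d (\<lambda>j. a j * b j) X"
  apply (subst lincomb_mult_left)
  apply (subst lincomb_cong[OF refl, where Y = "\<lambda>j. smat (a j) (X j)"])
   apply (simp add: orth_proj)
  by (simp add: lincomb_smat mult.commute)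

lemma orth_indep: "orth d X \<Longrightarrow> (\<forall>k\<le>d. X k \<noteq> 0) \<Longrightarrow> lincomb d a X = lincomb d b X
   \<Longrightarrow> k \<le> d \<Longrightarrow> a k = b k"
  by (metis orth_proj smat_cancel)

lemma lincomb_eig: "(\<And>i. i \<le> d \<Longrightarrow> X i ** Y = smat (r i) Y) \<Longrightarrow>
   lincomb d c X ** Y = smat (\<Sum>i\<le>d. c i * r i) Y"
  apply (subst lincomb_mult_right)
  apply (subst lincomb_cong[OF refl, where Y = "\<lambda>i. smat (r i) Y"])
   apply simp
  by (rule mat_eqI) (simp add: lincomb_entry smat_entry sum_distrib_right mult.assoc)

lemma ctrans_lincomb: "(\<And>i. i \<le> d \<Longrightarrow> ctrans (X i) = X i) \<Longrightarrow>
   ctrans (lincomb d a X) = lincomb d (\<lambda>i. cnj (a i)) X"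
proof -
  assume h: "\<And>i. i \<le> d \<Longrightarrow> ctrans (X i) = X i"
  have e: "cnj (X i $ y $ x) = X i $ x $ y" if "i \<le> d" for i x y
    using h[OF that] by (metis ctrans_entry)
  show ?thesis
    by (rule mat_eqI) (simp add: lincomb_entry ctrans_entry e)
qed

lemma schur_lincomb:
  assumes "\<And>i j. i \<le> d \<Longrightarrow> j \<le> d \<Longrightarrow> schur (X i) (X j) = smat w (lincomb d (Q i j) X)"
  shows "schur (lincomb d a X) (lincomb d b X) =
     lincomb d (\<lambda>k. \<Sum>i\<le>d. \<Sum>j\<le>d. a i * b j * (w * Q i j k)) X"
proof (rule mat_eqI)
  fix x y
  have e: "X i $ x $ y * X j $ x $ y = (\<Sum>k\<le>d. w * Q i j k * X k $ x $ y)" if "i \<le> d" "j \<le> d" for i j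
  proof -
    have "schur (X i) (X j) $ x $ y = smat w (lincomb d (Q i j) X) $ x $ y" using assms[OF that] by simp
    thus ?thesis by (simp add: schur_entry smat_entry lincomb_entry sum_distrib_left mult.assoc)
  qed
  have "schur (lincomb d a X) (lincomb d b X) $ x $ y =
     (\<Sum>i\<le>d. \<Sum>j\<le>d. a i * b j * (X i $ x $ y * X j $ x $ y))"
    unfolding schur_entry lincomb_entry sum_product by (simp add: mult_ac)
  also have "\<dots> = (\<Sum>i\<le>d. \<Sum>j\<le>d. \<Sum>k\<le>d. a i * b j * (w * Q i j k) * X k $ x $ y)"
    by (intro sum.cong refl) (simp add: e sum_distrib_left mult_ac)
  also have "\<dots> = (\<Sum>i\<le>d. \<Sum>k\<le>d. \<Sum>j\<le>d. a i * b j * (w * Q i j k) * X k $ x $ y)"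
    by (rule sum.cong[OF refl], rule sum.swap)
  also have "\<dots> = (\<Sum>k\<le>d. \<Sum>i\<le>d. \<Sum>j\<le>d. a i * b j * (w * Q i j k) * X k $ x $ y)"
    by (rule sum.swap)
  also have "\<dots> = lincomb d (\<lambda>k. \<Sum>i\<le>d. \<Sum>j\<le>d. a i * b j * (w * Q i j k)) X $ x $ y"
    by (simp add: lincomb_entry sum_distrib_right)
  finally show "schur (lincomb d a X) (lincomb d b X) $ x $ y = lincomb d (\<lambda>k. \<Sum>i\<le>d. \<Sum>j\<le>d. a i * b j * (w * Q i j k)) X $ x $ y" .
qed



lemma sf_gen: "subfield (gen_field S)" "S \<subseteq> gen_field S"
  unfolding gen_field_def subfield_def by auto

lemma sf_gen_least: "subfield F \<Longrightarrow> S \<subseteq> F \<Longrightarrow> gen_field S \<subseteq> F"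
  unfolding gen_field_def by auto

context fixes F assumes sf: "subfield F" begin
lemma sf0: "0 \<in> F" and sf1: "1 \<in> F" using sf unfolding subfield_def by auto
lemma sf_add: "x \<in> F \<Longrightarrow> y \<in> F \<Longrightarrow> x + y \<in> F" using sf unfolding subfield_def by auto
lemma sf_mult: "x \<in> F \<Longrightarrow> y \<in> F \<Longrightarrow> x * y \<in> F" using sf unfolding subfield_def by auto
lemma sf_neg: "x \<in> F \<Longrightarrow> - x \<in> F" using sf unfolding subfield_def by auto
lemma sf_inv: "x \<in> F \<Longrightarrow> inverse x \<in> F" using sf unfolding subfield_def by auto
lemma sf_diff: "x \<in> F \<Longrightarrow> y \<in> F \<Longrightarrow> x - y \<in> F"
  using sf_add sf_neg by (metis diff_conv_add_uminus)
lemma sf_div: "x \<in> F \<Longrightarrow> y \<in> F \<Longrightarrow> x / y \<in> F"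
  using sf_mult sf_inv by (metis divide_inverse)
lemma sf_sum: "finite S \<Longrightarrow> (\<And>i. i \<in> S \<Longrightarrow> f i \<in> F) \<Longrightarrow> sum f S \<in> F"
  by (induction S rule: finite_induct) (auto intro: sf0 sf_add)
lemma sf_of_nat: "of_nat n \<in> F"
  by (induction n) (auto intro: sf0 sf1 sf_add)
end

definition inL :: "complex set \<Rightarrow> 'v::finite cmat \<Rightarrow> bool" where
  "inL F M \<longleftrightarrow> (\<forall>x y. M $ x $ y \<in> F)"

context fixes F assumes sf: "subfield F" begin
lemma inL_mult: "inL F X \<Longrightarrow> inL F Y \<Longrightarrow> inL F (X ** Y)"
  unfolding inL_def matmul_entry by (auto intro!: sf_sum[OF sf] sf_mult[OF sf])
lemma inL_add: "inL F X \<Longrightarrow> inL F Y \<Longrightarrow> inL F (X + Y)"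
  unfolding inL_def by (auto intro!: sf_add[OF sf])
lemma inL_smat: "c \<in> F \<Longrightarrow> inL F X \<Longrightarrow> inL F (smat c X)"
  unfolding inL_def smat_entry by (auto intro!: sf_mult[OF sf])
lemma inL_schur: "inL F X \<Longrightarrow> inL F Y \<Longrightarrow> inL F (schur X Y)"
  unfolding inL_def schur_entry by (auto intro!: sf_mult[OF sf])
lemma inL_mat1: "inL F (mat 1)"
  unfolding inL_def mat_def using sf0[OF sf] sf1[OF sf] by simp
lemma inL_01: assumes "\<forall>x y. X $ x $ y \<in> {0,1}" shows "inL F X"
  unfolding inL_def
proof (intro allI)
  fix x y
  have "X $ x $ y = 0 \<or> X $ x $ y = 1" using assms by blast
  thus "X $ x $ y \<in> F" using sf0[OF sf] sf1[OF sf] by auto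
qed
lemma inL_lincomb: "(\<And>i. i \<le> d \<Longrightarrow> c i \<in> F) \<Longrightarrow> (\<And>i. i \<le> d \<Longrightarrow> inL F (X i)) \<Longrightarrow> inL F (lincomb d c X)"
  unfolding inL_def lincomb_entry by (auto intro!: sf_sum[OF sf] sf_mult[OF sf])
end

context fixes F \<sigma> assumes sf: "subfield F" and ga: "field_aut F \<sigma>" begin
lemma sg_in: "x \<in> F \<Longrightarrow> \<sigma> x \<in> F"
  using ga unfolding field_aut_def by (meson bij_betwE)
lemma sg_inj: "x \<in> F \<Longrightarrow> y \<in> F \<Longrightarrow> \<sigma> x = \<sigma> y \<Longrightarrow> x = y"
  using ga unfolding field_aut_def by (meson bij_betw_imp_inj_on inj_onD)
lemma sg_add: "x \<in> F \<Longrightarrow> y \<in> F \<Longrightarrow> \<sigma> (x + y) = \<sigma> x + \<sigma> y"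
  using ga unfolding field_aut_def by auto
lemma sg_mult: "x \<in> F \<Longrightarrow> y \<in> F \<Longrightarrow> \<sigma> (x * y) = \<sigma> x * \<sigma> y"
  using ga unfolding field_aut_def by auto
lemma sg1: "\<sigma> 1 = 1" using ga unfolding field_aut_def by auto
lemma sg0: "\<sigma> 0 = 0"
  using sg_add[OF sf0[OF sf] sf0[OF sf]] by simp
lemma sg_neg: "x \<in> F \<Longrightarrow> \<sigma> (- x) = - \<sigma> x"
proof -
  assume x: "x \<in> F"
  have "\<sigma> x + \<sigma> (-x) = 0" using sg_add[OF x sf_neg[OF sf x]] sg0 by simp
  thus ?thesis by (simp add: add_eq_0_iff)
qed
lemma sg_inv: "x \<in> F \<Longrightarrow> \<sigma> (inverse x) = inverse (\<sigma> x)"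
proof (cases "x = 0")
  case True thus ?thesis by (simp add: sg0)
next
  case False
  assume x: "x \<in> F"
  have "\<sigma> x * \<sigma> (inverse x) = 1"
    using sg_mult[OF x sf_inv[OF sf x]] False sg1 by simp
  thus ?thesis by (metis inverse_unique)
qed
lemma sg_div: "x \<in> F \<Longrightarrow> y \<in> F \<Longrightarrow> \<sigma> (x / y) = \<sigma> x / \<sigma> y"
  by (simp add: divide_inverse sg_mult sf_inv[OF sf] sg_inv)
lemma sg_sum: "finite S \<Longrightarrow> (\<And>i. i \<in> S \<Longrightarrow> f i \<in> F) \<Longrightarrow> \<sigma> (sum f S) = (\<Sum>i\<in>S. \<sigma> (f i))"
  by (induction S rule: finite_induct) (auto simp: sg0 sg_add sf_sum[OF sf])
lemma sg_of_nat: "\<sigma> (of_nat n) = of_nat n"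
  by (induction n) (auto simp: sg0 sg1 sg_add sf_of_nat[OF sf] sf1[OF sf])
lemma sg_nz: "x \<in> F \<Longrightarrow> x \<noteq> 0 \<Longrightarrow> \<sigma> x \<noteq> 0"
  using sg_inj sg0 sf0[OF sf] by metis

lemma ent_mult: "inL F X \<Longrightarrow> inL F Y \<Longrightarrow> entrywise \<sigma> (X ** Y) = entrywise \<sigma> X ** entrywise \<sigma> Y"
  unfolding inL_def by (intro mat_eqI) (simp add: ent_entry matmul_entry sg_sum sf_mult[OF sf] sg_mult)
lemma ent_smat: "c \<in> F \<Longrightarrow> inL F X \<Longrightarrow> entrywise \<sigma> (smat c X) = smat (\<sigma> c) (entrywise \<sigma> X)"
  unfolding inL_def by (intro mat_eqI) (simp add: ent_entry smat_entry sg_mult)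
lemma ent_schur: "inL F X \<Longrightarrow> inL F Y \<Longrightarrow> entrywise \<sigma> (schur X Y) = schur (entrywise \<sigma> X) (entrywise \<sigma> Y)"
  unfolding inL_def by (intro mat_eqI) (simp add: ent_entry schur_entry sg_mult)
lemma ent_lincomb: "(\<And>i. i \<le> d \<Longrightarrow> c i \<in> F) \<Longrightarrow> (\<And>i. i \<le> d \<Longrightarrow> inL F (X i)) \<Longrightarrow>
   entrywise \<sigma> (lincomb d c X) = lincomb d (\<lambda>i. \<sigma> (c i)) (\<lambda>i. entrywise \<sigma> (X i))"
proof (intro mat_eqI)
  fix x y
  assume c: "\<And>i. i \<le> d \<Longrightarrow> c i \<in> F" and X: "\<And>i. i \<le> d \<Longrightarrow> inL F (X i)"
  have m: "c i * X i $ x $ y \<in> F" if "i \<in> {..d}" for i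
    using c X that unfolding inL_def by (auto intro: sf_mult[OF sf])
  have "\<sigma> (\<Sum>i\<le>d. c i * X i $ x $ y) = (\<Sum>i\<le>d. \<sigma> (c i * X i $ x $ y))"
    by (rule sg_sum) (use m in auto)
  also have "\<dots> = (\<Sum>i\<le>d. \<sigma> (c i) * \<sigma> (X i $ x $ y))"
    by (rule sum.cong) (use c X in \<open>auto simp: inL_def sg_mult\<close>)
  finally show "entrywise \<sigma> (lincomb d c X) $ x $ y = lincomb d (\<lambda>i. \<sigma> (c i)) (\<lambda>i. entrywise \<sigma> (X i)) $ x $ y"
    by (simp add: ent_entry lincomb_entry)
qed
lemma ent_01: assumes "\<forall>x y. X $ x $ y \<in> {0,1}" shows "entrywise \<sigma> X = X"
proof (intro mat_eqI)
  fix x y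
  have "X $ x $ y = 0 \<or> X $ x $ y = 1" using assms by blast
  thus "entrywise \<sigma> X $ x $ y = X $ x $ y" using sg0 sg1 by (auto simp: ent_entry)
qed
lemma ent_zero: "entrywise \<sigma> 0 = 0"
  by (intro mat_eqI) (simp add: ent_entry sg0)
lemma inL_ent: "inL F X \<Longrightarrow> inL F (entrywise \<sigma> X)"
  unfolding inL_def by (simp add: ent_entry sg_in)
end



lemma smat_one: "smat 1 M = M" by (rule mat_eqI) (simp add: smat_entry)
lemma smat_smat: "smat a (smat b M) = smat (a * b) M" by (rule mat_eqI) (simp add: smat_entry)
lemma smat_add: "smat a M + smat b M = smat (a + b) M" by (rule mat_eqI) (simp add: smat_entry distrib_right)
lemma smat_zero: "smat a 0 = 0" by (rule mat_eqI) (simp add: smat_entry)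
lemma comb_mult: "(smat r X + smat s Y) ** Z = smat r (X ** Z) + smat s (Y ** Z)"
  by (rule mat_eqI) (simp add: smat_entry matmul_entry distrib_right sum.distrib sum_distrib_left mult.assoc)

locale setting =
  fixes d :: nat and A E :: "nat \<Rightarrow> 'v::finite cmat" and p :: "nat \<Rightarrow> nat \<Rightarrow> complex"
    and q :: "nat \<Rightarrow> nat \<Rightarrow> nat \<Rightarrow> complex" and \<sigma> :: "complex \<Rightarrow> complex" and L :: "complex set"
  assumes scheme: "assoc_scheme d A"
    and idem: "principal_idempotents d A E"
    and eig: "\<forall>i\<le>d. \<forall>j\<le>d. A i ** E j = smat (p i j) (E j)"
    and krein: "\<forall>i\<le>d. \<forall>j\<le>d.
                  schur (E i) (E j) = smat (1 / of_nat CARD('v)) (lincomb d (q i j) E)"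
    and Lsub: "subfield L" and pL: "\<And>i j. i \<le> d \<Longrightarrow> j \<le> d \<Longrightarrow> p i j \<in> L"
    and gal: "field_aut L \<sigma>"
begin

lemma orthE: "orth d E"
  using idem unfolding principal_idempotents_def orth_def by auto

lemma E_herm: "j \<le> d \<Longrightarrow> ctrans (E j) = E j"
  using idem unfolding principal_idempotents_def by auto

lemma E_nz: "j \<le> d \<Longrightarrow> E j \<noteq> 0"
proof
  assume j: "j \<le> d" and "E j = 0"
  hence "lincomb d (\<lambda>i. if i = j then 1 else 0) E = 0" by (simp add: lincomb_delta)
  hence "(\<lambda>i. if i = j then (1::complex) else 0) j = 0"
    using idem j unfolding principal_idempotents_def by blast
  thus False by simp
qed

lemma A01: "i \<le> d \<Longrightarrow> \<forall>x y. A i $ x $ y \<in> {0,1}"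
  using scheme unfolding assoc_scheme_def by auto

lemma A_eq: "i \<le> d \<Longrightarrow> A i = lincomb d (p i) E"
proof -
  assume i: "i \<le> d"
  have "A i = A i ** lincomb d (\<lambda>_. 1) E"
    using idem unfolding principal_idempotents_def by (simp add: sum_as_lincomb[symmetric])
  also have "\<dots> = lincomb d (\<lambda>_. 1) (\<lambda>j. smat (p i j) (E j))"
    unfolding lincomb_mult_left by (rule lincomb_cong) (use eig i in auto)
  also have "\<dots> = lincomb d (p i) E" by (simp add: lincomb_smat)
  finally show ?thesis .
qed

lemma col_distinct: "k \<le> d \<Longrightarrow> k' \<le> d \<Longrightarrow> (\<And>i. i \<le> d \<Longrightarrow> p i k = p i k') \<Longrightarrow> k = k'"
proof (rule ccontr)
  assume k: "k \<le> d" "k' \<le> d" and eq: "\<And>i. i \<le> d \<Longrightarrow> p i k = p i k'" and ne: "k \<noteq> k'"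
  obtain c where c: "E k = lincomb d c A" using idem k unfolding principal_idempotents_def by blast
  have ev: "E k ** E m = smat (\<Sum>i\<le>d. c i * p i m) (E m)" if "m \<le> d" for m
    unfolding c by (rule lincomb_eig) (use eig that in auto)
  have "E k ** E k = E k" using orthE k unfolding orth_def by auto
  hence "smat (\<Sum>i\<le>d. c i * p i k) (E k) = smat 1 (E k)" using ev[OF k(1)] by (simp add: smat_one)
  hence s1: "(\<Sum>i\<le>d. c i * p i k) = 1" by (rule smat_cancel) (rule E_nz[OF k(1)])
  have "(\<Sum>i\<le>d. c i * p i k') = (\<Sum>i\<le>d. c i * p i k)" by (rule sum.cong) (simp_all add: eq)
  hence "(\<Sum>i\<le>d. c i * p i k') = 1" using s1 by simp
  moreover have "E k ** E k' = 0" using orthE k ne unfolding orth_def by auto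
  ultimately have "E k' = 0" using ev[OF k(2)] by (simp add: smat_one)
  thus False using E_nz k by blast
qed

lemma E_build: "finite S \<Longrightarrow> S \<subseteq> {..d} - {j} \<Longrightarrow> j \<le> d \<Longrightarrow>
   \<exists>X f. inL L X \<and> X = lincomb d f E \<and> f j = 1 \<and> (\<forall>l\<in>S. f l = 0)"
proof (induction S rule: finite_induct)
  case empty
  have "mat 1 = lincomb d (\<lambda>_. 1) E"
    using idem unfolding principal_idempotents_def by (simp add: sum_as_lincomb[symmetric])
  thus ?case using inL_mat1[OF Lsub] by blast
next
  case (insert k S)
  then obtain X f where X: "inL L X" "X = lincomb d f E" "f j = 1" "\<forall>l\<in>S. f l = 0" by auto
  have k: "k \<le> d" "k \<noteq> j" using insert by auto
  obtain i where i: "i \<le> d" "p i j \<noteq> p i k" using col_distinct[OF insert(5) k(1)] k(2) by metis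
  define r where "r = 1 / (p i j - p i k)"
  define s where "s = - p i k / (p i j - p i k)"
  define g where "g l = r * p i l + s" for l
  define M where "M = smat r (A i) + smat s (mat 1)"
  have rs: "r \<in> L" "s \<in> L" unfolding r_def s_def using pL i insert(5) k(1) Lsub
    by (auto intro!: sf_div sf_diff sf_neg sf1)
  have M_L: "inL L M" unfolding M_def
    by (intro inL_add[OF Lsub] inL_smat[OF Lsub] rs inL_mat1[OF Lsub] inL_01[OF Lsub] A01 i)
  have ME: "M ** E l = smat (g l) (E l)" if "l \<le> d" for l
    unfolding M_def comb_mult g_def using eig i that by (simp add: smat_smat smat_add)
  have "M ** X = lincomb d (\<lambda>l. f l * g l) E"
    unfolding X(2) lincomb_mult_left
    by (subst lincomb_cong[OF refl, where Y = "\<lambda>l. smat (g l) (E l)"]) (simp_all add: ME lincomb_smat)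
  moreover have "g j = 1"
  proof -
    have D: "p i j - p i k \<noteq> 0" using i by simp
    have "g j = p i j / (p i j - p i k) - p i k / (p i j - p i k)" unfolding g_def r_def s_def by simp
    also have "\<dots> = (p i j - p i k) / (p i j - p i k)" by (rule diff_divide_distrib[symmetric])
    also have "\<dots> = 1" using D by simp
    finally show ?thesis .
  qed
  moreover have "g k = 0" unfolding g_def r_def s_def using i by (simp add: field_simps)
  ultimately show ?case using inL_mult[OF Lsub M_L X(1)] X by (intro exI[of _ "M ** X"] exI[of _ "\<lambda>l. f l * g l"]) auto
qed

lemma E_inL: "j \<le> d \<Longrightarrow> inL L (E j)"
proof -
  assume j: "j \<le> d"
  obtain X f where X: "inL L X" "X = lincomb d f E" "f j = 1" "\<forall>l\<in>{..d} - {j}. f l = 0"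
    using E_build[of "{..d} - {j}" j] j by auto
  have "X = lincomb d (\<lambda>i. if i = j then 1 else 0) E"
    unfolding X(2) by (rule lincomb_cong) (use X in auto)
  thus ?thesis using X(1) lincomb_delta[OF j, of E] by simp
qed

lemma coeff_inL: "inL L M \<Longrightarrow> M = lincomb d a E \<Longrightarrow> k \<le> d \<Longrightarrow> a k \<in> L"
proof -
  assume M: "inL L M" "M = lincomb d a E" and k: "k \<le> d"
  obtain x y where xy: "E k $ x $ y \<noteq> 0" using E_nz[OF k] by (auto simp: vec_eq_iff)
  have "M ** E k = smat (a k) (E k)" using M(2) orth_proj[OF orthE k] by simp
  hence "(M ** E k) $ x $ y / E k $ x $ y = a k" using xy by (simp add: smat_entry)
  moreover have "(M ** E k) $ x $ y / E k $ x $ y \<in> L"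
    using inL_mult[OF Lsub M(1) E_inL[OF k]] E_inL[OF k] unfolding inL_def by (auto intro: sf_div[OF Lsub])
  ultimately show ?thesis by simp
qed

lemma A_supp: "i \<le> d \<Longrightarrow> i' \<le> d \<Longrightarrow> A i $ x $ y \<noteq> 0 \<Longrightarrow> i' \<noteq> i \<Longrightarrow> A i' $ x $ y = 0"
proof (rule ccontr)
  assume h: "i \<le> d" "i' \<le> d" "A i $ x $ y \<noteq> 0" "i' \<noteq> i" "A i' $ x $ y \<noteq> 0"
  have one: "A i $ x $ y = 1" "A i' $ x $ y = 1" using A01 h by auto
  have nn: "\<forall>m\<in>{..d}. 0 \<le> Re (A m $ x $ y)"
  proof
    fix m assume "m \<in> {..d}"
    hence "A m $ x $ y = 0 \<or> A m $ x $ y = 1" using A01 by blast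
    thus "0 \<le> Re (A m $ x $ y)" by auto
  qed
  have "(\<Sum>m\<in>{i,i'}. Re (A m $ x $ y)) \<le> (\<Sum>m\<le>d. Re (A m $ x $ y))"
    by (rule sum_mono2) (use h nn in auto)
  also have "\<dots> = Re ((\<Sum>m\<le>d. A m) $ x $ y)" by simp
  also have "\<dots> = 1" using scheme unfolding assoc_scheme_def Jmat_def by simp
  finally show False using one h(4) by simp
qed

lemma E_Lcoef: "j \<le> d \<Longrightarrow> \<exists>c. (\<forall>i\<le>d. c i \<in> L) \<and> E j = lincomb d c A"
proof -
  assume j: "j \<le> d"
  obtain c where c: "E j = lincomb d c A" using idem j unfolding principal_idempotents_def by blast
  have "c i \<in> L" if i: "i \<le> d" for i
  proof -
    have "A i \<noteq> 0" using scheme i unfolding assoc_scheme_def by auto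
    then obtain x y where xy: "A i $ x $ y \<noteq> 0" by (auto simp: vec_eq_iff)
    hence one: "A i $ x $ y = 1" using A01 i by auto
    have "E j $ x $ y = (\<Sum>m\<le>d. c m * A m $ x $ y)" using c by (simp add: lincomb_entry)
    also have "\<dots> = (\<Sum>m\<le>d. if m = i then c i else 0)"
      by (rule sum.cong) (use A_supp[OF i _ xy] one in auto)
    also have "\<dots> = c i" using i by simp
    finally show ?thesis using E_inL[OF j] unfolding inL_def by metis
  qed
  thus ?thesis using c by blast
qed

lemma Lspan_eq: "Lspan L d A = {lincomb d a E | a. \<forall>j\<le>d. a j \<in> L}"
proof (intro set_eqI iffI)
  fix M assume "M \<in> Lspan L d A"
  then obtain c where c: "\<forall>i\<le>d. c i \<in> L" "M = lincomb d c A" unfolding Lspan_def by blast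
  have "M = lincomb d c (\<lambda>i. lincomb d (p i) E)" unfolding c(2) by (rule lincomb_cong) (simp_all add: A_eq)
  also have "\<dots> = lincomb d (\<lambda>k. \<Sum>i\<le>d. c i * p i k) E" by (rule lincomb_lincomb)
  finally show "M \<in> {lincomb d a E | a. \<forall>j\<le>d. a j \<in> L}"
    using c(1) pL by (auto intro!: sf_sum[OF Lsub] sf_mult[OF Lsub])
next
  fix M assume "M \<in> {lincomb d a E | a. \<forall>j\<le>d. a j \<in> L}"
  then obtain a where a: "\<forall>j\<le>d. a j \<in> L" "M = lincomb d a E" by blast
  obtain C where C: "\<forall>j\<le>d. (\<forall>i\<le>d. C j i \<in> L) \<and> E j = lincomb d (C j) A"
    using E_Lcoef by metis
  have "M = lincomb d a (\<lambda>j. lincomb d (C j) A)" unfolding a(2) by (rule lincomb_cong) (use C in auto)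
  also have "\<dots> = lincomb d (\<lambda>k. \<Sum>j\<le>d. a j * C j k) A" by (rule lincomb_lincomb)
  finally have "M = lincomb d (\<lambda>k. \<Sum>j\<le>d. a j * C j k) A" .
  moreover have "\<forall>k\<le>d. (\<Sum>j\<le>d. a j * C j k) \<in> L"
  proof (intro allI impI)
    fix k assume k: "k \<le> d"
    show "(\<Sum>j\<le>d. a j * C j k) \<in> L"
    proof (rule sf_sum[OF Lsub])
      fix j assume "j \<in> {..d}"
      hence "a j \<in> L" "C j k \<in> L" using a(1) C k by auto
      thus "a j * C j k \<in> L" by (rule sf_mult[OF Lsub])
    qed simp
  qed
  ultimately show "M \<in> Lspan L d A" unfolding Lspan_def
    by (intro CollectI exI[of _ "\<lambda>k. \<Sum>j\<le>d. a j * C j k"] conjI)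
qed

end


context setting begin

definition Fm :: "nat \<Rightarrow> 'v cmat" where "Fm j = entrywise \<sigma> (E j)"

lemma F_orth: "orth d Fm"
  unfolding orth_def
proof (intro allI impI)
  fix i j assume ij: "i \<le> d" "j \<le> d"
  have "Fm i ** Fm j = entrywise \<sigma> (E i ** E j)"
    unfolding Fm_def by (simp add: ent_mult[OF Lsub gal] E_inL ij)
  also have "E i ** E j = (if i = j then E i else 0)" using orthE ij unfolding orth_def by auto
  finally show "Fm i ** Fm j = (if i = j then Fm i else 0)"
    by (simp add: Fm_def ent_zero[OF Lsub gal])
qed

lemma F_nz: "j \<le> d \<Longrightarrow> Fm j \<noteq> 0"
proof
  assume j: "j \<le> d" and z: "Fm j = 0"
  obtain x y where xy: "E j $ x $ y \<noteq> 0" using E_nz[OF j] by (auto simp: vec_eq_iff)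
  have "\<sigma> (E j $ x $ y) \<noteq> 0" using sg_nz[OF Lsub gal] xy E_inL[OF j] unfolding inL_def by blast
  moreover have "\<sigma> (E j $ x $ y) = 0" using z by (metis Fm_def ent_entry zero_index)
  ultimately show False by simp
qed

lemma F_eig: "i \<le> d \<Longrightarrow> j \<le> d \<Longrightarrow> A i ** Fm j = smat (\<sigma> (p i j)) (Fm j)"
proof -
  assume ij: "i \<le> d" "j \<le> d"
  have "A i ** Fm j = entrywise \<sigma> (A i) ** entrywise \<sigma> (E j)"
    by (simp add: Fm_def ent_01[OF Lsub gal A01[OF ij(1)]])
  also have "\<dots> = entrywise \<sigma> (A i ** E j)"
    by (simp add: ent_mult[OF Lsub gal] E_inL ij inL_01[OF Lsub A01])
  also have "\<dots> = entrywise \<sigma> (smat (p i j) (E j))" using eig ij by simp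
  also have "\<dots> = smat (\<sigma> (p i j)) (Fm j)"
    by (simp add: Fm_def ent_smat[OF Lsub gal] pL ij E_inL)
  finally show ?thesis .
qed

lemma F_span: "j \<le> d \<Longrightarrow> \<exists>f. Fm j = lincomb d f E"
proof -
  assume j: "j \<le> d"
  obtain c where c: "\<forall>i\<le>d. c i \<in> L" "E j = lincomb d c A" using E_Lcoef[OF j] by blast
  have "Fm j = lincomb d (\<lambda>i. \<sigma> (c i)) (\<lambda>i. entrywise \<sigma> (A i))"
    unfolding Fm_def c(2) by (rule ent_lincomb[OF Lsub gal]) (use c inL_01[OF Lsub A01] in auto)
  also have "\<dots> = lincomb d (\<lambda>i. \<sigma> (c i)) (\<lambda>i. lincomb d (p i) E)"
    by (rule lincomb_cong) (simp, metis ent_01[OF Lsub gal A01] A_eq)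
  also have "\<dots> = lincomb d (\<lambda>k. \<Sum>i\<le>d. \<sigma> (c i) * p i k) E" by (rule lincomb_lincomb)
  finally show ?thesis by blast
qed

lemma F_is_E: "j \<le> d \<Longrightarrow> \<exists>k\<le>d. Fm j = E k"
proof -
  assume j: "j \<le> d"
  obtain f where f: "Fm j = lincomb d f E" using F_span[OF j] by blast
  have ff: "f l * p i l = \<sigma> (p i j) * f l" if il: "i \<le> d" "l \<le> d" for i l
  proof -
    have "lincomb d (\<lambda>l. f l * p i l) E = A i ** Fm j"
      unfolding f lincomb_mult_left
      by (subst lincomb_cong[OF refl, where Y = "\<lambda>l. smat (p i l) (E l)"]) (simp_all add: eig il lincomb_smat)
    also have "\<dots> = lincomb d (\<lambda>l. \<sigma> (p i j) * f l) E"
      using F_eig[OF il(1) j] f by (simp add: smat_lincomb)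
    finally show ?thesis using orth_indep[OF orthE] E_nz il(2) by blast
  qed
  have "\<exists>k\<le>d. f k \<noteq> 0"
  proof (rule ccontr)
    assume "\<not> ?thesis"
    hence "Fm j = lincomb d (\<lambda>_. 0) E" unfolding f by (intro lincomb_cong) auto
    thus False using F_nz[OF j] lincomb_zero by metis
  qed
  then obtain k where k: "k \<le> d" "f k \<noteq> 0" by blast
  have zero: "f l = 0" if l: "l \<le> d" "l \<noteq> k" for l
  proof (rule ccontr)
    assume fl: "f l \<noteq> 0"
    have "p i l = p i k" if "i \<le> d" for i
      using ff[OF that l(1)] ff[OF that k(1)] fl k(2) by (metis mult.commute mult_left_cancel)
    hence "l = k" using col_distinct[OF l(1) k(1)] by blast
    thus False using l by blast
  qed
  have fk: "Fm j = smat (f k) (E k)"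
  proof -
    have "Fm j = lincomb d (\<lambda>l. f k * (if l = k then 1 else 0)) E"
      unfolding f by (rule lincomb_cong) (use zero in auto)
    thus ?thesis by (simp add: smat_lincomb[symmetric] lincomb_delta k(1))
  qed
  have "Fm j ** Fm j = Fm j" using F_orth j unfolding orth_def by auto
  hence "lincomb d (\<lambda>l. f l * f l) E = lincomb d f E" unfolding f orth_mult[OF orthE] .
  hence "f k * f k = f k" using orth_indep[OF orthE] E_nz k(1) by blast
  hence "f k = 1" using k(2) by simp
  thus ?thesis using fk k(1) by (auto simp: smat_one)
qed

lemma perm_exists: "\<exists>\<pi>. (\<forall>j\<le>d. \<pi> j \<le> d \<and> Fm j = E (\<pi> j)) \<and> inj_on \<pi> {..d}"
proof -
  have "\<forall>j. \<exists>k. j \<le> d \<longrightarrow> k \<le> d \<and> Fm j = E k" using F_is_E by blast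
  then obtain \<pi> where pi: "\<forall>j. j \<le> d \<longrightarrow> \<pi> j \<le> d \<and> Fm j = E (\<pi> j)" by metis
  have "inj_on \<pi> {..d}"
  proof (rule inj_onI, rule ccontr)
    fix i j assume ij: "i \<in> {..d}" "j \<in> {..d}" "\<pi> i = \<pi> j" "i \<noteq> j"
    have "Fm i ** Fm j = 0" using F_orth ij unfolding orth_def by auto
    moreover have "Fm i ** Fm j = E (\<pi> i)" using pi ij orthE unfolding orth_def by auto
    ultimately show False using E_nz pi ij by auto
  qed
  thus ?thesis using pi by blast
qed

lemma F_herm: "j \<le> d \<Longrightarrow> ctrans (Fm j) = Fm j"
  using F_is_E E_herm by metis

lemma v_L: "(1 / of_nat CARD('v) :: complex) \<in> L"
  by (intro sf_div[OF Lsub] sf1[OF Lsub] sf_of_nat[OF Lsub])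

lemma sg_v: "\<sigma> (1 / of_nat CARD('v)) = 1 / of_nat CARD('v)"
  by (simp add: sg_div[OF Lsub gal] sf1[OF Lsub] sf_of_nat[OF Lsub] sg1[OF Lsub gal] sg_of_nat[OF Lsub gal])

lemma q_inL: "i \<le> d \<Longrightarrow> j \<le> d \<Longrightarrow> k \<le> d \<Longrightarrow> q i j k \<in> L"
proof -
  assume ijk: "i \<le> d" "j \<le> d" "k \<le> d"
  have "schur (E i) (E j) = lincomb d (\<lambda>k. 1 / of_nat CARD('v) * q i j k) E"
    using krein ijk by (simp add: smat_lincomb)
  hence "1 / of_nat CARD('v) * q i j k \<in> L"
    using coeff_inL[OF inL_schur[OF Lsub E_inL E_inL]] ijk by blast
  hence "of_nat CARD('v) * (1 / of_nat CARD('v) * q i j k) \<in> L"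
    by (rule sf_mult[OF Lsub sf_of_nat[OF Lsub]])
  thus ?thesis by simp
qed

lemma F_krein: "i \<le> d \<Longrightarrow> j \<le> d \<Longrightarrow>
   schur (Fm i) (Fm j) = smat (1 / of_nat CARD('v)) (lincomb d (\<lambda>k. \<sigma> (q i j k)) Fm)"
proof -
  assume ij: "i \<le> d" "j \<le> d"
  have "schur (Fm i) (Fm j) = entrywise \<sigma> (schur (E i) (E j))"
    by (simp add: Fm_def ent_schur[OF Lsub gal] E_inL ij)
  also have "\<dots> = entrywise \<sigma> (smat (1 / of_nat CARD('v)) (lincomb d (q i j) E))" using krein ij by simp
  also have "\<dots> = smat (\<sigma> (1 / of_nat CARD('v))) (entrywise \<sigma> (lincomb d (q i j) E))"
    by (rule ent_smat[OF Lsub gal v_L]) (intro inL_lincomb[OF Lsub] q_inL E_inL ij)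
  also have "entrywise \<sigma> (lincomb d (q i j) E) = lincomb d (\<lambda>k. \<sigma> (q i j k)) Fm"
    unfolding Fm_def by (rule ent_lincomb[OF Lsub gal]) (simp_all add: q_inL E_inL ij)
  finally show ?thesis by (simp add: sg_v)
qed

lemma coeffs_lc: "coeffs d E (lincomb d a E) = (\<lambda>j. if j \<le> d then a j else 0)"
  unfolding coeffs_def
proof (rule the_equality)
  show "(\<forall>j>d. (if j \<le> d then a j else 0) = 0) \<and> lincomb d a E = lincomb d (\<lambda>j. if j \<le> d then a j else 0) E"
    by (auto intro: lincomb_cong)
next
  fix b assume b: "(\<forall>j>d. b j = 0) \<and> lincomb d a E = lincomb d b E"
  show "b = (\<lambda>j. if j \<le> d then a j else 0)"
  proof
    fix j show "b j = (if j \<le> d then a j else 0)"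
      using b orth_indep[OF orthE, of a b j] E_nz by (cases "j \<le> d") auto
  qed
qed

lemma hat_lc: "hat \<sigma> d E (lincomb d a E) = lincomb d a Fm"
  unfolding hat_def coeffs_lc by (simp add: lincomb_def Fm_def)

end


context setting begin

theorem main_iff:
  "BM_aut L (Lspan L d A) (hat \<sigma> d E) \<longleftrightarrow> (\<forall>i\<le>d. \<forall>j\<le>d. \<forall>k\<le>d. \<sigma> (q i j k) = q i j k)"
proof
  assume BM: "BM_aut L (Lspan L d A) (hat \<sigma> d E)"
  show "\<forall>i\<le>d. \<forall>j\<le>d. \<forall>k\<le>d. \<sigma> (q i j k) = q i j k"
  proof (intro allI impI)
    fix i j k assume ijk: "i \<le> d" "j \<le> d" "k \<le> d"
    have inS: "E m \<in> Lspan L d A" if "m \<le> d" for m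
    proof -
      have "E m = lincomb d (\<lambda>l. if l = m then 1 else 0) E" using lincomb_delta[OF that, of E] by simp
      moreover have "\<forall>l\<le>d. (if l = m then 1 else 0) \<in> L" using sf0[OF Lsub] sf1[OF Lsub] by auto
      ultimately show ?thesis unfolding Lspan_eq by blast
    qed
    have hE: "hat \<sigma> d E (E m) = Fm m" if "m \<le> d" for m
      using hat_lc[of "\<lambda>l. if l = m then 1 else 0"] lincomb_delta[OF that] by metis
    have "hat \<sigma> d E (schur (E i) (E j)) = schur (hat \<sigma> d E (E i)) (hat \<sigma> d E (E j))"
      using BM inS ijk unfolding BM_aut_def by blast
    hence "hat \<sigma> d E (lincomb d (\<lambda>k. 1 / of_nat CARD('v) * q i j k) E) = schur (Fm i) (Fm j)"
      using krein ijk hE by (simp add: smat_lincomb)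
    hence "lincomb d (\<lambda>k. 1 / of_nat CARD('v) * q i j k) Fm =
        lincomb d (\<lambda>k. 1 / of_nat CARD('v) * \<sigma> (q i j k)) Fm"
      using F_krein[OF ijk(1,2)] by (simp add: hat_lc smat_lincomb)
    hence "1 / of_nat CARD('v) * q i j k = 1 / of_nat CARD('v) * \<sigma> (q i j k)"
      using orth_indep[OF F_orth] F_nz ijk(3) by blast
    thus "\<sigma> (q i j k) = q i j k" by simp
  qed
next
  assume hfix: "\<forall>i\<le>d. \<forall>j\<le>d. \<forall>k\<le>d. \<sigma> (q i j k) = q i j k"
  define S where "S = {lincomb d a E | a. \<forall>j\<le>d. a j \<in> L}"
  have SL: "Lspan L d A = S" unfolding S_def by (rule Lspan_eq)
  obtain \<pi> where pi: "\<forall>j\<le>d. \<pi> j \<le> d \<and> Fm j = E (\<pi> j)" and inj: "inj_on \<pi> {..d}"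
    using perm_exists by blast
  have img: "\<pi> ` {..d} = {..d}" by (rule endo_inj_surj) (use pi inj in auto)
  define \<pi>' where "\<pi>' = inv_into {..d} \<pi>"
  have pp1: "\<pi>' (\<pi> j) = j" if "j \<le> d" for j unfolding \<pi>'_def using inj that by (simp add: inv_into_f_f)
  have pp2: "\<pi>' k \<le> d" if "k \<le> d" for k unfolding \<pi>'_def using img that
    by (metis atMost_iff inv_into_into)
  have reidx: "lincomb d (\<lambda>j. b (\<pi> j)) Fm = lincomb d b E" for b
  proof -
    have "lincomb d (\<lambda>j. b (\<pi> j)) Fm = (\<Sum>j\<le>d. (\<lambda>k. smat (b k) (E k)) (\<pi> j))"
      unfolding lincomb_def by (rule sum.cong) (use pi in auto)
    also have "\<dots> = (\<Sum>k\<in>\<pi> ` {..d}. smat (b k) (E k))" by (rule sum.reindex[OF inj, symmetric, unfolded comp_def])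
    also have "\<dots> = lincomb d b E" unfolding img lincomb_def ..
    finally show ?thesis .
  qed
  have Fkrein: "schur (Fm i) (Fm j) = smat (1 / of_nat CARD('v)) (lincomb d (q i j) Fm)" if "i \<le> d" "j \<le> d" for i j
    using F_krein[OF that] by (simp add: hfix that cong: lincomb_cong)
  have Fh: "\<And>i. i \<le> d \<Longrightarrow> ctrans (Fm i) = Fm i" by (rule F_herm)
  have Eh: "\<And>i. i \<le> d \<Longrightarrow> ctrans (E i) = E i" by (rule E_herm)
  have indepF: "\<And>a b. lincomb d a Fm = lincomb d b Fm \<Longrightarrow> \<forall>k\<le>d. a k = b k"
    using orth_indep[OF F_orth] F_nz by blast
  let ?h = "hat \<sigma> d E"
  have bij: "bij_betw ?h S S"
    unfolding bij_betw_def
  proof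
    show "inj_on ?h S"
    proof (rule inj_onI)
      fix M N assume "M \<in> S" "N \<in> S" and eq: "?h M = ?h N"
      then obtain a b where ab: "M = lincomb d a E" "N = lincomb d b E" unfolding S_def by blast
      have "\<forall>k\<le>d. a k = b k" using eq unfolding ab hat_lc by (rule indepF)
      thus "M = N" unfolding ab by (intro lincomb_cong) auto
    qed
  next
    show "?h ` S = S"
    proof (intro set_eqI iffI)
      fix N assume "N \<in> ?h ` S"
      then obtain a where a: "\<forall>j\<le>d. a j \<in> L" "N = ?h (lincomb d a E)" unfolding S_def by blast
      have "N = lincomb d (\<lambda>j. (\<lambda>k. a (\<pi>' k)) (\<pi> j)) Fm"
        unfolding a(2) hat_lc by (rule lincomb_cong) (simp_all add: pp1)
      also have "\<dots> = lincomb d (\<lambda>k. a (\<pi>' k)) E" by (rule reidx)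
      finally show "N \<in> S" unfolding S_def using a(1) pp2 by blast
    next
      fix N assume "N \<in> S"
      then obtain b where b: "\<forall>j\<le>d. b j \<in> L" "N = lincomb d b E" unfolding S_def by blast
      have "lincomb d (\<lambda>j. b (\<pi> j)) E \<in> S" unfolding S_def using b(1) pi by auto
      moreover have "?h (lincomb d (\<lambda>j. b (\<pi> j)) E) = N" unfolding hat_lc b(2) by (rule reidx)
      ultimately show "N \<in> ?h ` S" by (metis image_eqI)
    qed
  qed
  have add: "\<forall>M\<in>S. \<forall>N\<in>S. ?h (M + N) = ?h M + ?h N"
    unfolding S_def by (auto simp: lincomb_add hat_lc)
  have sm: "\<forall>c\<in>L. \<forall>M\<in>S. ?h (smat c M) = smat c (?h M)"
    unfolding S_def by (auto simp: smat_lincomb hat_lc)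
  have mul: "\<forall>M\<in>S. \<forall>N\<in>S. ?h (M ** N) = ?h M ** ?h N"
    unfolding S_def by (auto simp: orth_mult[OF orthE] orth_mult[OF F_orth] hat_lc)
  have sch: "\<forall>M\<in>S. \<forall>N\<in>S. ?h (schur M N) = schur (?h M) (?h N)"
    unfolding S_def using krein
    by (auto simp: schur_lincomb[where w = "1 / of_nat CARD('v)" and Q = q, OF Fkrein]
           schur_lincomb[where w = "1 / of_nat CARD('v)" and Q = q and X = E] hat_lc)
  have ct: "\<forall>M\<in>S. ?h (ctrans M) = ctrans (?h M)"
    unfolding S_def by (auto simp: ctrans_lincomb[OF Eh] ctrans_lincomb[OF Fh] hat_lc)
  show "BM_aut L (Lspan L d A) ?h"
    unfolding BM_aut_def SL using bij add sm mul sch ct by blast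
qed

end

theorem theorem4p2:
  fixes d :: nat
    and A E :: "nat \<Rightarrow> complex^'v::finite^'v"
    and p :: "nat \<Rightarrow> nat \<Rightarrow> complex"
    and q :: "nat \<Rightarrow> nat \<Rightarrow> nat \<Rightarrow> complex"
    and \<sigma> :: "complex \<Rightarrow> complex"
  assumes scheme: "assoc_scheme d A"
    and idem: "principal_idempotents d A E"
    and eig: "\<forall>i\<le>d. \<forall>j\<le>d. A i ** E j = smat (p i j) (E j)"
    and krein: "\<forall>i\<le>d. \<forall>j\<le>d.
                  schur (E i) (E j) = smat (1 / of_nat CARD('v)) (lincomb d (q i j) E)"
    and gal: "field_aut (gen_field {p i j |i j. i \<le> d \<and> j \<le> d}) \<sigma>"
  shows "BM_aut (gen_field {p i j |i j. i \<le> d \<and> j \<le> d})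
                (Lspan (gen_field {p i j |i j. i \<le> d \<and> j \<le> d}) d A)
                (hat \<sigma> d E)
         \<longleftrightarrow> (\<forall>x\<in>gen_field {q i j k |i j k. i \<le> d \<and> j \<le> d \<and> k \<le> d}. \<sigma> x = x)"
proof -
  let ?L = "gen_field {p i j |i j. i \<le> d \<and> j \<le> d}"
  let ?Q = "{q i j k |i j k. i \<le> d \<and> j \<le> d \<and> k \<le> d}"
  have pL: "p i j \<in> ?L" if "i \<le> d" "j \<le> d" for i j
    using sf_gen(2)[of "{p i j |i j. i \<le> d \<and> j \<le> d}"] that by blast
  interpret S: setting d A E p q \<sigma> ?L
    by (rule setting.intro[OF scheme idem eig krein sf_gen(1) pL gal])
  have "(\<forall>i\<le>d. \<forall>j\<le>d. \<forall>k\<le>d. \<sigma> (q i j k) = q i j k) \<longleftrightarrow> (\<forall>x\<in>gen_field ?Q. \<sigma> x = x)"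
  proof
    assume h: "\<forall>i\<le>d. \<forall>j\<le>d. \<forall>k\<le>d. \<sigma> (q i j k) = q i j k"
    define Fx where "Fx = {x \<in> ?L. \<sigma> x = x}"
    have sub: "subfield Fx" unfolding subfield_def Fx_def
      using sf0[OF S.Lsub] sf1[OF S.Lsub] sg0[OF S.Lsub S.gal] sg1[OF S.Lsub S.gal]
        sf_add[OF S.Lsub] sf_mult[OF S.Lsub] sg_add[OF S.Lsub S.gal] sg_mult[OF S.Lsub S.gal]
        sf_neg[OF S.Lsub] sg_neg[OF S.Lsub S.gal] sf_inv[OF S.Lsub] sg_inv[OF S.Lsub S.gal]
      by auto
    have "?Q \<subseteq> Fx" unfolding Fx_def using h S.q_inL by blast
    hence "gen_field ?Q \<subseteq> Fx" by (rule sf_gen_least[OF sub])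
    thus "\<forall>x\<in>gen_field ?Q. \<sigma> x = x" unfolding Fx_def by blast
  next
    assume h: "\<forall>x\<in>gen_field ?Q. \<sigma> x = x"
    show "\<forall>i\<le>d. \<forall>j\<le>d. \<forall>k\<le>d. \<sigma> (q i j k) = q i j k"
      using h sf_gen(2)[of ?Q] by blast
  qed
  thus ?thesis using S.main_iff by simp
qed

end
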